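(* For $p_q\in(0,1)$, $p_a\in[0,1]$ let $$\mathbf{R}(p_q,p_a)=\Big\{(\lambda_p,\lambda_s)\in[0,1]^2:\ \lambda_s< p_q f_{sd}\Big[1-\frac{\lambda_p}{f_{pd}+p_a f_{ps}(1-f_{pd})}\Big],\ \lambda_p<\frac{f_{sd}(1-p_q)[f_{pd}+p_a f_{ps}(1-f_{pd})]}{f_{sd}(1-p_q)+p_a f_{ps}(1-f_{pd})}\Big\}.$$ Then $$\bigcup_{p_q\in(0,1),\,p_a\in[0,1]}\mathbf{R}(p_q,p_a)=\Big\{(\lambda_p,\lambda_s)\in[0,1]^2:\ \lambda_s<f_{sd}-\frac{f_{sd}+f_{ps}(1-f_{pd})}{f_{pd}+f_{ps}(1-f_{pd})}\,\lambda_p\Big\}.$$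
   Context: Constants $f_{pd},f_{ps},f_{sd}\in(0,1)$ with $f_{pd}<f_{sd}$ are link success probabilities (PU→destination, PU→SU, SU→destination). $\mathbf{R}(p_q,p_a)$ is the stable throughput region of the cognitive cooperative system under the randomized service policy with queue-selection probability $p_q$ and relay admission probability $p_a$. *)

theory Defs
  imports Complex_Main
begin

definition stab_region :: "real \<Rightarrow> real \<Rightarrow> real \<Rightarrow> real \<Rightarrow> real \<Rightarrow> (real \<times> real) set" where
  "stab_region fpd fps fsd pq pa =
     {(lp, ls). lp \<in> {0..1} \<and> ls \<in> {0..1} \<and>
        ls < pq * fsd * (1 - lp / (fpd + pa * fps * (1 - fpd))) \<and>
        lp < fsd * (1 - pq) * (fpd + pa * fps * (1 - fpd)) /
               (fsd * (1 - pq) + pa * fps * (1 - fpd))}"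

end

theory Submission
  imports Defs
begin

lemma sub1:
  fixes fpd fps fsd pq pa lp ls :: real
  assumes "0 < fpd" "fpd < 1" "0 < fps" "fps < 1" "0 < fsd" "fsd < 1" "fpd < fsd"
    and pq: "0 < pq" "pq < 1" and pa: "0 \<le> pa" "pa \<le> 1"
    and lp: "0 \<le> lp" and h1: "ls < pq * fsd * (1 - lp / (fpd + pa * fps * (1 - fpd)))"
    and h2: "lp < fsd * (1 - pq) * (fpd + pa * fps * (1 - fpd)) /
               (fsd * (1 - pq) + pa * fps * (1 - fpd))"
  shows "ls < fsd - (fsd + fps * (1 - fpd)) / (fpd + fps * (1 - fpd)) * lp"
proof -
  define a where "a = fps * (1 - fpd)"
  define A where "A = fpd + pa * a"
  define B where "B = fpd + a"
  have a0: "a > 0" using assms unfolding a_def by auto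
  have pa0: "pa * a \<ge> 0" using a0 pa by auto
  have pa1: "pa * a \<le> a" using a0 pa by (simp add: mult_left_le_one_le)
  have A0: "A > 0" using assms pa0 unfolding A_def by linarith
  have D0: "fsd * (1 - pq) + pa * a > 0" using assms pa0 pq by (smt (verit) mult_pos_pos)
  have h2': "lp * (fsd * (1 - pq) + pa * a) < fsd * (1 - pq) * A"
    using h2 D0 unfolding A_def a_def by (simp add: pos_less_divide_eq mult.assoc)
  have "lp * (fsd * (1 - pq)) \<le> lp * (fsd * (1 - pq) + pa * a)"
    using lp pa0 by (simp add: mult_left_mono)
  hence "lp * (fsd * (1 - pq)) < fsd * (1 - pq) * A" using h2' by linarith
  hence lpA: "lp < A" using assms pq by (smt (verit) mult_pos_pos mult.commute mult_less_cancel_left)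
  have h1': "ls * A < pq * fsd * (A - lp)"
    using h1 A0 unfolding A_def a_def by (simp add: field_simps)
  have k: "pq * fsd * (A - lp) < fsd * (A - lp) - lp * pa * a"
    using h2' by (simp add: algebra_simps)
  have "ls * A < fsd * A - lp * (fsd + pa * a)" using h1' k unfolding A_def by (simp add: algebra_simps)
  hence c1: "ls < fsd - (fsd + pa * a) / A * lp" using A0
    by (simp add: field_simps)
  have B0: "B > 0" using A0 pa1 unfolding A_def B_def by linarith
  have "(fsd + a) * A \<le> (fsd + pa * a) * B"
  proof -
    have "(fsd + pa * a) * B - (fsd + a) * A = (fsd - fpd) * (a - pa * a)"
      unfolding A_def B_def by (simp add: algebra_simps)
    moreover have "(fsd - fpd) * (a - pa * a) \<ge> 0" using assms pa1 by simp
    ultimately show ?thesis by linarith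
  qed
  hence "(fsd + a) / B \<le> (fsd + pa * a) / A" using A0 B0 by (simp add: divide_simps mult.commute)
  hence "(fsd + a) / B * lp \<le> (fsd + pa * a) / A * lp" using lp by (rule mult_right_mono)
  thus ?thesis using c1 unfolding a_def B_def by linarith
qed

lemma sub2:
  fixes fpd fps fsd lp ls :: real
  assumes "0 < fpd" "fpd < 1" "0 < fps" "fps < 1" "0 < fsd" "fsd < 1" "fpd < fsd"
    and lp: "0 \<le> lp" and ls: "0 \<le> ls"
    and h: "ls < fsd - (fsd + fps * (1 - fpd)) / (fpd + fps * (1 - fpd)) * lp"
  shows "\<exists>pq. 0 < pq \<and> pq < 1 \<and>
        ls < pq * fsd * (1 - lp / (fpd + 1 * fps * (1 - fpd))) \<and>
        lp < fsd * (1 - pq) * (fpd + 1 * fps * (1 - fpd)) /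
               (fsd * (1 - pq) + 1 * fps * (1 - fpd))"
proof -
  define a where "a = fps * (1 - fpd)"
  define B where "B = fpd + a"
  have a0: "a > 0" using assms unfolding a_def by auto
  have B0: "B > 0" using a0 assms unfolding B_def by linarith
  have h': "ls * B < fsd * B - (fsd + a) * lp" using h B0 unfolding a_def B_def
    by (simp add: field_simps)
  have "ls * B \<ge> 0" using ls B0 by simp
  hence "(fsd + a) * lp < fsd * B" using h' by linarith
  moreover have "a * lp \<ge> 0" using a0 lp by simp
  ultimately have "fsd * lp < fsd * B" by (simp add: distrib_right)
  hence lpB: "lp < B" using assms by simp
  define L where "L = ls * B / (fsd * (B - lp))"
  define P where "P = 1 - lp * a / (fsd * (B - lp))"
  have E: "fsd * (B - lp) > 0" using lpB assms by simp
  have L0: "L \<ge> 0" unfolding L_def using E ls B0 by simp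
  have P1: "P \<le> 1" unfolding P_def using E lp a0 by simp
  have LP: "L < P"
  proof -
    have "ls * B + lp * a < fsd * (B - lp)" using h' unfolding B_def by (simp add: algebra_simps)
    hence "(ls * B + lp * a) / (fsd * (B - lp)) < 1" using E by simp
    thus ?thesis unfolding L_def P_def using E by (simp add: add_divide_distrib)
  qed
  define pq where "pq = (L + P) / 2"
  have pq0: "0 < pq" "pq < 1" "L < pq" "pq < P" unfolding pq_def using L0 P1 LP by auto
  have c1: "ls < pq * fsd * (1 - lp / B)"
  proof -
    have "ls * B < pq * (fsd * (B - lp))" using pq0(3) E unfolding L_def
      by (simp add: pos_divide_less_eq mult.commute)
    thus ?thesis using B0 by (simp add: field_simps)
  qed
  have c2: "lp < fsd * (1 - pq) * B / (fsd * (1 - pq) + a)"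
  proof -
    have "lp * a / (fsd * (B - lp)) < 1 - pq" using pq0(4) unfolding P_def by linarith
    hence "lp * a < (1 - pq) * (fsd * (B - lp))" using E by (simp add: pos_divide_less_eq)
    hence "lp * (fsd * (1 - pq) + a) < fsd * (1 - pq) * B" by (simp add: algebra_simps)
    moreover have "fsd * (1 - pq) + a > 0" using pq0 assms a0 by (smt (verit) mult_pos_pos)
    ultimately show ?thesis by (simp add: pos_less_divide_eq mult.assoc)
  qed
  show ?thesis using pq0 c1 c2 unfolding a_def B_def by auto
qed

theorem theorem2:
  fixes fpd fps fsd :: real
  assumes "0 < fpd" "fpd < 1" "0 < fps" "fps < 1" "0 < fsd" "fsd < 1" "fpd < fsd"
  shows "(\<Union>pq\<in>{0<..<1}. \<Union>pa\<in>{0..1}. stab_region fpd fps fsd pq pa) =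
         {(lp, ls). lp \<in> {0..1} \<and> ls \<in> {0..1} \<and>
            ls < fsd - (fsd + fps * (1 - fpd)) / (fpd + fps * (1 - fpd)) * lp}"
proof (rule set_eqI, clarify)
  fix lp ls
  show "((lp, ls) \<in> (\<Union>pq\<in>{0<..<1}. \<Union>pa\<in>{0..1}. stab_region fpd fps fsd pq pa)) =
        ((lp, ls) \<in> {(lp, ls). lp \<in> {0..1} \<and> ls \<in> {0..1} \<and>
            ls < fsd - (fsd + fps * (1 - fpd)) / (fpd + fps * (1 - fpd)) * lp})"
  proof
    assume "(lp, ls) \<in> (\<Union>pq\<in>{0<..<1}. \<Union>pa\<in>{0..1}. stab_region fpd fps fsd pq pa)"
    then obtain pq pa where "pq \<in> {0<..<1}" "pa \<in> {0..1}" "(lp, ls) \<in> stab_region fpd fps fsd pq pa"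
      by blast
    thus "(lp, ls) \<in> {(lp, ls). lp \<in> {0..1} \<and> ls \<in> {0..1} \<and>
            ls < fsd - (fsd + fps * (1 - fpd)) / (fpd + fps * (1 - fpd)) * lp}"
      using sub1[OF assms, of pq pa lp ls] unfolding stab_region_def by auto
  next
    assume H: "(lp, ls) \<in> {(lp, ls). lp \<in> {0..1} \<and> ls \<in> {0..1} \<and>
            ls < fsd - (fsd + fps * (1 - fpd)) / (fpd + fps * (1 - fpd)) * lp}"
    then obtain pq where pq: "0 < pq \<and> pq < 1 \<and>
        ls < pq * fsd * (1 - lp / (fpd + 1 * fps * (1 - fpd))) \<and>
        lp < fsd * (1 - pq) * (fpd + 1 * fps * (1 - fpd)) /
               (fsd * (1 - pq) + 1 * fps * (1 - fpd))"
      using sub2[OF assms, of lp ls] by auto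
    have "(lp, ls) \<in> stab_region fpd fps fsd pq 1"
      unfolding stab_region_def using H pq by auto
    thus "(lp, ls) \<in> (\<Union>pq\<in>{0<..<1}. \<Union>pa\<in>{0..1}. stab_region fpd fps fsd pq pa)"
      using pq by force
  qed
qed

end
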